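(* Let $V$ be a reflexive Banach space, $X$ a Banach space, $\gamma\in\mathcal{L}(V,X)$ with $c_\gamma:=\|\gamma\|_{\mathcal{L}(V,X)}$ and adjoint $\gamma^*\colon X^*\to V^*$. Let $A\colon V\to V^*$, $J\colon X\times X\to\mathbb{R}$ and $f\in V^*$ satisfy: (A1) $A$ is linear and bounded; (A2) $\langle Au,v\rangle_{V^*\times V}=\langle Av,u\rangle_{V^*\times V}$ for all $u,v\in V$; (A3) there is $m_A>0$ with $\langle Au,u\rangle_{V^*\times V}\ge m_A\|u\|_V^2$ for all $u\in V$; (J1) $J$ is locally Lipschitz continuous with respect to its second variable; (J2) there exist $c_0,c_1,c_2\ge 0$ with $\|\partial_2 J(w,v)\|_{X^*}\le c_0+c_1\|v\|_X+c_2\|w\|_X$ for all $w,v\in X$; (J3) there exist $m_\alpha,m_L\ge0$ such that $J_2^0(w_1,v_1;v_2-v_1)+J_2^0(w_2,v_2;v_1-v_2)\le m_\alpha\|v_1-v_2\|_X^2+m_L\|w_1-w_2\|_X\|v_1-v_2\|_X$ for all $w_1,w_2,v_1,v_2\in X$; (S) $m_A>(m_\alpha+m_L)c_\gamma^2$. Define $\mathcal{L}\colon V\times V\to\mathbb{R}$ by $\mathcal{L}(w,v)=\tfrac12\langle Av,v\rangle_{V^*\times V}-\langle f,v\rangle_{V^*\times V}+J(\gamma w,\gamma v)$. Then: (i) $\mathcal{L}(w,\cdot)$ is locally Lipschitz continuous for all $w\in V$; (ii) $\partial_2\mathcal{L}(w,v)\subseteq Av-f+\gamma^*\partial_2J(\gamma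 w,\gamma v)$ for all $w,v\in V$; (iii) $\mathcal{L}(w,\cdot)$ is strictly convex for all $w\in V$.
   Context: For a locally Lipschitz function $g$ on a Banach space $Y$, the generalized (Clarke) directional derivative at $x$ in direction $v$ is $g^0(x;v)=\limsup_{y\to x,\lambda\searrow0}\frac{g(y+\lambda v)-g(y)}{\lambda}$, and the Clarke subdifferential is $\partial g(x)=\{\xi\in Y^*:\langle\xi,v\rangle\le g^0(x;v)\ \forall v\in Y\}$. For a function of two variables, $\partial_2$ and $(\cdot)_2^0$ denote the Clarke subdifferential and generalized directional derivative with respect to the second variable. $\|\partial_2J(w,v)\|_{X^*}$ denotes $\sup\{\|\xi\|_{X^*}:\xi\in\partial_2J(w,v)\}$. *)

theory Defs
  imports "HOL-Analysis.Analysis" "HOL-Library.Liminf_Limsup"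
begin

definition reflexive_space :: "'v::real_normed_vector itself \<Rightarrow> bool" where
  "reflexive_space TYPE('v) \<longleftrightarrow>
     (\<forall>\<Phi> :: ('v \<Rightarrow>\<^sub>L real) \<Rightarrow>\<^sub>L real. \<exists>v::'v. \<forall>\<xi>. blinfun_apply \<Phi> \<xi> = blinfun_apply \<xi> v)"

definition loc_lipschitz :: "('a::metric_space \<Rightarrow> real) \<Rightarrow> bool" where
  "loc_lipschitz g \<longleftrightarrow>
     (\<forall>x. \<exists>e>0. \<exists>L. \<forall>y\<in>ball x e. \<forall>z\<in>ball x e. \<bar>g y - g z\<bar> \<le> L * dist y z)"

definition clarke_dd :: "('a::real_normed_vector \<Rightarrow> real) \<Rightarrow> 'a \<Rightarrow> 'a \<Rightarrow> ereal" where
  "clarke_dd g x v =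
     Limsup (nhds x \<times>\<^sub>F at_right (0::real))
       (\<lambda>(y, t). ereal ((g (y + t *\<^sub>R v) - g y) / t))"

definition clarke_subdiff :: "('a::real_normed_vector \<Rightarrow> real) \<Rightarrow> 'a \<Rightarrow> ('a \<Rightarrow>\<^sub>L real) set" where
  "clarke_subdiff g x = {\<xi>. \<forall>v. ereal (blinfun_apply \<xi> v) \<le> clarke_dd g x v}"

definition strictly_convex :: "('a::real_vector \<Rightarrow> real) \<Rightarrow> bool" where
  "strictly_convex g \<longleftrightarrow>
     (\<forall>x y t. x \<noteq> y \<and> 0 < t \<and> t < 1 \<longrightarrow>
        g ((1 - t) *\<^sub>R x + t *\<^sub>R y) < (1 - t) * g x + t * g y)"

end

theory Submission
  imports Defs
begin


definition ple :: "('a::real_normed_vector \<Rightarrow> real) \<Rightarrow> 'a \<Rightarrow> 'a \<Rightarrow> real \<Rightarrow> bool" where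
  "ple g x v r \<longleftrightarrow> (\<forall>e>0. \<exists>d>0. \<forall>y t. dist y x < d \<longrightarrow> 0 < t \<longrightarrow> t < d \<longrightarrow>
       (g (y + t *\<^sub>R v) - g y) / t \<le> r + e)"

lemma cdd_le_iff: "clarke_dd g x v \<le> ereal r \<longleftrightarrow> ple g x v r"
proof
  assume H: "clarke_dd g x v \<le> ereal r"
  show "ple g x v r" unfolding ple_def
  proof (intro allI impI)
    fix e :: real assume e: "e > 0"
    have "ereal r < ereal (r + e)" using e by simp
    with H have "clarke_dd g x v < ereal (r + e)" by (rule le_less_trans)
    hence "eventually (\<lambda>p. (case p of (y, t) \<Rightarrow> ereal ((g (y + t *\<^sub>R v) - g y) / t)) < ereal (r + e))
              (nhds x \<times>\<^sub>F at_right (0::real))"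
      unfolding clarke_dd_def by (rule Limsup_lessD)
    hence "\<exists>Pf Pg. eventually Pf (nhds x) \<and> eventually Pg (at_right (0::real)) \<and>
      (\<forall>y t. Pf y \<longrightarrow> Pg t \<longrightarrow> (case (y, t) of (y, t) \<Rightarrow> ereal ((g (y + t *\<^sub>R v) - g y) / t)) < ereal (r + e))"
      by (simp only: eventually_prod_filter)
    then obtain Pf Pg where P: "eventually Pf (nhds x)" "eventually Pg (at_right (0::real))"
      "\<And>y t. Pf y \<Longrightarrow> Pg t \<Longrightarrow> ereal ((g (y + t *\<^sub>R v) - g y) / t) < ereal (r + e)"
      by auto
    from P(1) obtain d1 where d1: "d1 > 0" "\<And>y. dist y x < d1 \<Longrightarrow> Pf y"
      unfolding eventually_nhds_metric by blast
    from P(2) obtain d2 where d2: "d2 > 0" "\<And>t. t > 0 \<Longrightarrow> t < d2 \<Longrightarrow> Pg t"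
      unfolding eventually_at_right_field by blast
    show "\<exists>d>0. \<forall>y t. dist y x < d \<longrightarrow> 0 < t \<longrightarrow> t < d \<longrightarrow> (g (y + t *\<^sub>R v) - g y) / t \<le> r + e"
    proof (intro exI[of _ "min d1 d2"] conjI allI impI)
      show "min d1 d2 > 0" using d1 d2 by simp
      fix y t assume "dist y x < min d1 d2" "0 < t" "t < min d1 d2"
      hence "Pf y" "Pg t" using d1 d2 by auto
      hence "ereal ((g (y + t *\<^sub>R v) - g y) / t) < ereal (r + e)" by (rule P(3))
      thus "(g (y + t *\<^sub>R v) - g y) / t \<le> r + e" by simp
    qed
  qed
next
  assume H: "ple g x v r"
  show "clarke_dd g x v \<le> ereal r"
  proof (rule ereal_le_epsilon2)
    fix e :: real assume e: "e > 0"
    from H e obtain d where d: "d > 0" "\<And>y t. dist y x < d \<Longrightarrow> 0 < t \<Longrightarrow> t < d \<Longrightarrow>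
       (g (y + t *\<^sub>R v) - g y) / t \<le> r + e" unfolding ple_def by blast
    have ev1: "eventually (\<lambda>y. dist y x < d) (nhds x)"
      unfolding eventually_nhds_metric using d by blast
    have ev2: "eventually (\<lambda>t. 0 < t \<and> t < d) (at_right (0::real))"
      unfolding eventually_at_right_field using d by blast
    have "eventually (\<lambda>p. (case p of (y, t) \<Rightarrow> ereal ((g (y + t *\<^sub>R v) - g y) / t)) \<le> ereal r + ereal e)
              (nhds x \<times>\<^sub>F at_right (0::real))"
      unfolding eventually_prod_filter
    proof (intro exI conjI allI impI)
      show "eventually (\<lambda>y. dist y x < d) (nhds x)" by (rule ev1)
      show "eventually (\<lambda>t. 0 < t \<and> t < d) (at_right (0::real))" by (rule ev2)
      fix y t assume "dist y x < d" "0 < t \<and> t < d"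
      thus "(case (y, t) of (y, t) \<Rightarrow> ereal ((g (y + t *\<^sub>R v) - g y) / t)) \<le> ereal r + ereal e"
        using d(2) by simp
    qed
    thus "clarke_dd g x v \<le> ereal r + ereal e" unfolding clarke_dd_def by (rule Limsup_bounded)
  qed
qed

lemma pleD:
  assumes "ple g x v r" "e > 0"
  shows "\<exists>d>0. \<forall>y t. dist y x < d \<longrightarrow> 0 < t \<longrightarrow> t < d \<longrightarrow> (g (y + t *\<^sub>R v) - g y) / t \<le> r + e"
  using assms unfolding ple_def by blast

lemma ple_add:
  assumes "ple g x u a" "ple g x w b"
  shows "ple g x (u + w) (a + b)"
  unfolding ple_def
proof (intro allI impI)
  fix e :: real assume e: "e > 0"
  obtain d1 where d1: "d1 > 0" "\<forall>y t. dist y x < d1 \<longrightarrow> 0 < t \<longrightarrow> t < d1 \<longrightarrow>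
       (g (y + t *\<^sub>R u) - g y) / t \<le> a + e/2" using pleD[OF assms(1) half_gt_zero[OF e]] by blast
  obtain d2 where d2: "d2 > 0" "\<forall>y t. dist y x < d2 \<longrightarrow> 0 < t \<longrightarrow> t < d2 \<longrightarrow>
       (g (y + t *\<^sub>R w) - g y) / t \<le> b + e/2" using pleD[OF assms(2) half_gt_zero[OF e]] by blast
  define d where "d = min (min d2 (d1/2)) (d1 / (2 * (norm w + 1)))"
  have nw: "norm w + 1 > 0" by (smt (verit) norm_ge_zero)
  have dpos: "d > 0" unfolding d_def using d1 d2 nw by (auto intro!: divide_pos_pos)
  show "\<exists>d>0. \<forall>y t. dist y x < d \<longrightarrow> 0 < t \<longrightarrow> t < d \<longrightarrow> (g (y + t *\<^sub>R (u + w)) - g y) / t \<le> a + b + e"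
  proof (intro exI[of _ d] conjI dpos allI impI)
    fix y t assume y: "dist y x < d" and t: "0 < t" "t < d"
    have tw: "t * norm w < d1 / 2"
    proof -
      have "t * norm w \<le> t * (norm w + 1)" using t by simp
      also have "\<dots> < d1 / (2 * (norm w + 1)) * (norm w + 1)"
        using t d_def nw by (intro mult_strict_right_mono) auto
      also have "\<dots> = d1 / 2" using nw by (simp add: field_simps)
      finally show ?thesis .
    qed
    have "dist (y + t *\<^sub>R w) x \<le> dist y x + t * norm w"
      proof -
      have "dist (y + t *\<^sub>R w) x = norm ((y - x) + t *\<^sub>R w)" by (simp add: dist_norm algebra_simps)
      also have "\<dots> \<le> norm (y - x) + norm (t *\<^sub>R w)" by (rule norm_triangle_ineq)
      also have "\<dots> = dist y x + t * norm w" using t by (simp add: dist_norm)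
      finally show ?thesis .
    qed
    hence dy: "dist (y + t *\<^sub>R w) x < d1" using y tw d_def by simp
    have q1: "(g ((y + t *\<^sub>R w) + t *\<^sub>R u) - g (y + t *\<^sub>R w)) / t \<le> a + e/2"
      using d1(2) dy t d_def by auto
    have q2: "(g (y + t *\<^sub>R w) - g y) / t \<le> b + e/2"
      using d2(2) y t d_def by auto
    have eq: "y + t *\<^sub>R (u + w) = (y + t *\<^sub>R w) + t *\<^sub>R u" by (simp add: algebra_simps)
    have "(g (y + t *\<^sub>R (u + w)) - g y) / t =
        (g ((y + t *\<^sub>R w) + t *\<^sub>R u) - g (y + t *\<^sub>R w)) / t + (g (y + t *\<^sub>R w) - g y) / t"
      unfolding eq by (simp add: diff_divide_distrib)
    thus "(g (y + t *\<^sub>R (u + w)) - g y) / t \<le> a + b + e" using q1 q2 by simp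
  qed
qed

lemma ple_scale:
  assumes "ple g x v r" "c > 0"
  shows "ple g x (c *\<^sub>R v) (c * r)"
  unfolding ple_def
proof (intro allI impI)
  fix e :: real assume e: "e > 0"
  obtain d1 where d1: "d1 > 0" "\<forall>y t. dist y x < d1 \<longrightarrow> 0 < t \<longrightarrow> t < d1 \<longrightarrow>
       (g (y + t *\<^sub>R v) - g y) / t \<le> r + e / c" using pleD[OF assms(1) divide_pos_pos[OF e assms(2)]] by blast
  show "\<exists>d>0. \<forall>y t. dist y x < d \<longrightarrow> 0 < t \<longrightarrow> t < d \<longrightarrow> (g (y + t *\<^sub>R (c *\<^sub>R v)) - g y) / t \<le> c * r + e"
  proof (intro exI[of _ "min d1 (d1 / c)"] conjI allI impI)
    show "min d1 (d1 / c) > 0" using d1 assms by simp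
    fix y t assume y: "dist y x < min d1 (d1 / c)" and t: "0 < t" "t < min d1 (d1 / c)"
    have tc: "c * t < d1" using t assms by (simp add: field_simps)
    have "(g (y + (c * t) *\<^sub>R v) - g y) / (c * t) \<le> r + e / c"
      using d1(2) y tc t assms by auto
    hence "g (y + (c * t) *\<^sub>R v) - g y \<le> (r + e / c) * (c * t)"
      using t assms by (subst (asm) pos_divide_le_eq) auto
    also have "(r + e / c) * (c * t) = (c * r + e) * t"
      using assms by (simp add: distrib_left distrib_right)
    finally have "(g (y + (c * t) *\<^sub>R v) - g y) / t \<le> c * r + e"
      using t by (subst pos_divide_le_eq) auto
    moreover have "t *\<^sub>R (c *\<^sub>R v) = (c * t) *\<^sub>R v" by (simp add: mult.commute)
    ultimately show "(g (y + t *\<^sub>R (c *\<^sub>R v)) - g y) / t \<le> c * r + e" by (simp only:)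
  qed
qed

lemma ple_zero: "ple g x 0 0"
  unfolding ple_def by (auto intro: exI[of _ 1])

lemma ple_sum:
  assumes "ple g1 x v a" "ple g2 x v b"
  shows "ple (\<lambda>y. g1 y + g2 y) x v (a + b)"
  unfolding ple_def
proof (intro allI impI)
  fix e :: real assume e: "e > 0"
  obtain d1 where d1: "d1 > 0" "\<forall>y t. dist y x < d1 \<longrightarrow> 0 < t \<longrightarrow> t < d1 \<longrightarrow>
       (g1 (y + t *\<^sub>R v) - g1 y) / t \<le> a + e/2" using pleD[OF assms(1) half_gt_zero[OF e]] by blast
  obtain d2 where d2: "d2 > 0" "\<forall>y t. dist y x < d2 \<longrightarrow> 0 < t \<longrightarrow> t < d2 \<longrightarrow>
       (g2 (y + t *\<^sub>R v) - g2 y) / t \<le> b + e/2" using pleD[OF assms(2) half_gt_zero[OF e]] by blast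
  show "\<exists>d>0. \<forall>y t. dist y x < d \<longrightarrow> 0 < t \<longrightarrow> t < d \<longrightarrow> (g1 (y + t *\<^sub>R v) + g2 (y + t *\<^sub>R v) - (g1 y + g2 y)) / t \<le> a + b + e"
  proof (intro exI[of _ "min d1 d2"] conjI allI impI)
    show "min d1 d2 > 0" using d1 d2 by simp
    fix y t assume y: "dist y x < min d1 d2" and t: "0 < t" "t < min d1 d2"
    have "(g1 (y + t *\<^sub>R v) - g1 y) / t \<le> a + e/2" "(g2 (y + t *\<^sub>R v) - g2 y) / t \<le> b + e/2"
      using d1 d2 y t by auto
    thus "(g1 (y + t *\<^sub>R v) + g2 (y + t *\<^sub>R v) - (g1 y + g2 y)) / t \<le> a + b + e"
      by (simp add: add_divide_distrib diff_divide_distrib)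
  qed
qed

lemma ple_comp:
  fixes T :: "'a::real_normed_vector \<Rightarrow>\<^sub>L 'b::real_normed_vector"
  assumes "ple g (T x) (T v) r"
  shows "ple (\<lambda>y. g (T y)) x v r"
  unfolding ple_def
proof (intro allI impI)
  fix e :: real assume e: "e > 0"
  obtain d1 where d1: "d1 > 0" "\<forall>y t. dist y (T x) < d1 \<longrightarrow> 0 < t \<longrightarrow> t < d1 \<longrightarrow>
       (g (y + t *\<^sub>R T v) - g y) / t \<le> r + e" using pleD[OF assms e] by blast
  show "\<exists>d>0. \<forall>y t. dist y x < d \<longrightarrow> 0 < t \<longrightarrow> t < d \<longrightarrow> (g (T (y + t *\<^sub>R v)) - g (T y)) / t \<le> r + e"
  proof (intro exI[of _ "min d1 (d1 / (norm T + 1))"] conjI allI impI)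
    have nT: "norm T + 1 > 0" by (smt (verit) norm_ge_zero)
    show "min d1 (d1 / (norm T + 1)) > 0" using d1 nT by (auto intro!: divide_pos_pos)
    fix y t assume y: "dist y x < min d1 (d1 / (norm T + 1))" and t: "0 < t" "t < min d1 (d1 / (norm T + 1))"
    have "dist (T y) (T x) = norm (T (y - x))" by (simp add: dist_norm blinfun.diff_right)
    also have "\<dots> \<le> norm T * norm (y - x)" by (rule norm_blinfun)
    also have "\<dots> \<le> (norm T + 1) * dist y x" by (simp add: dist_norm mult_right_mono)
    also have "\<dots> < (norm T + 1) * (d1 / (norm T + 1))"
      using y nT by (intro mult_strict_left_mono) auto
    also have "\<dots> = d1" using nT by simp
    finally have "dist (T y) (T x) < d1" .
    thus "(g (T (y + t *\<^sub>R v)) - g (T y)) / t \<le> r + e"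
      using d1(2) t by (simp add: blinfun.add_right blinfun.scaleR_right)
  qed
qed



lemma loc_lip_get:
  assumes "loc_lipschitz g"
  obtains e K where "e > 0" "K \<ge> 0" "\<forall>y\<in>ball x e. \<forall>z\<in>ball x e. \<bar>g y - g z\<bar> \<le> K * dist y z"
proof -
  from assms obtain e L where e: "e > 0" "\<forall>y\<in>ball x e. \<forall>z\<in>ball x e. \<bar>g y - g z\<bar> \<le> L * dist y z"
    unfolding loc_lipschitz_def by blast
  have "\<forall>y\<in>ball x e. \<forall>z\<in>ball x e. \<bar>g y - g z\<bar> \<le> max L 0 * dist y z"
  proof (intro ballI)
    fix y z assume "y \<in> ball x e" "z \<in> ball x e"
    hence "\<bar>g y - g z\<bar> \<le> L * dist y z" using e by blast
    also have "\<dots> \<le> max L 0 * dist y z" by (intro mult_right_mono) auto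
    finally show "\<bar>g y - g z\<bar> \<le> max L 0 * dist y z" .
  qed
  moreover have "max L 0 \<ge> 0" by simp
  ultimately show ?thesis using that[OF e(1)] by blast
qed

lemma loc_lip_cont:
  assumes "loc_lipschitz g"
  shows "isCont g x"
proof -
  obtain e K where eK: "e > 0" "K \<ge> 0" "\<forall>y\<in>ball x e. \<forall>z\<in>ball x e. \<bar>g y - g z\<bar> \<le> K * dist y z"
    using loc_lip_get[OF assms] by blast
  show ?thesis unfolding continuous_at_eps_delta
  proof (intro allI impI)
    fix \<epsilon> :: real assume "\<epsilon> > 0"
    show "\<exists>\<delta>>0. \<forall>x'. dist x' x < \<delta> \<longrightarrow> dist (g x') (g x) < \<epsilon>"
    proof (intro exI[of _ "min e (\<epsilon> / (K + 1))"] conjI allI impI)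
      show "min e (\<epsilon> / (K + 1)) > 0" using eK \<open>\<epsilon> > 0\<close> by simp
      fix y assume y: "dist y x < min e (\<epsilon> / (K + 1))"
      have "y \<in> ball x e" "x \<in> ball x e" using y eK by (auto simp: dist_commute)
      hence "\<bar>g y - g x\<bar> \<le> K * dist y x" using eK by blast
      also have "\<dots> \<le> (K + 1) * dist y x" by (simp add: mult_right_mono)
      also have "\<dots> < (K + 1) * (\<epsilon> / (K + 1))" using y eK by (intro mult_strict_left_mono) auto
      also have "\<dots> = \<epsilon>" using eK by simp
      finally show "dist (g y) (g x) < \<epsilon>" by (simp add: dist_real_def)
    qed
  qed
qed

lemma lip_ple:
  assumes e: "e > 0" and K: "K \<ge> 0" and L: "\<forall>y\<in>ball x e. \<forall>z\<in>ball x e. \<bar>g y - g z\<bar> \<le> K * dist y z"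
  shows "ple g x v (K * norm v)"
  unfolding ple_def
proof (intro allI impI)
  fix \<epsilon> :: real assume "\<epsilon> > 0"
  have nv: "norm v + 1 > 0" by (smt (verit) norm_ge_zero)
  define d where "d = min (e/2) (e / (2 * (norm v + 1)))"
  have d: "d > 0" using e nv by (simp add: d_def)
  show "\<exists>d>0. \<forall>y t. dist y x < d \<longrightarrow> 0 < t \<longrightarrow> t < d \<longrightarrow> (g (y + t *\<^sub>R v) - g y) / t \<le> K * norm v + \<epsilon>"
  proof (intro exI[of _ d] conjI d allI impI)
    fix y t assume y: "dist y x < d" and t: "0 < t" "t < d"
    have tv: "t * norm v < e / 2"
    proof -
      have "t * norm v \<le> t * (norm v + 1)" using t by simp
      also have "\<dots> < e / (2 * (norm v + 1)) * (norm v + 1)"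
        using t d_def nv by (intro mult_strict_right_mono) auto
      also have "\<dots> = e / 2" using nv by (simp add: field_simps)
      finally show ?thesis .
    qed
    have "dist (y + t *\<^sub>R v) x \<le> dist y x + t * norm v"
      proof -
      have "dist (y + t *\<^sub>R v) x = norm ((y - x) + t *\<^sub>R v)" by (simp add: dist_norm algebra_simps)
      also have "\<dots> \<le> norm (y - x) + norm (t *\<^sub>R v)" by (rule norm_triangle_ineq)
      also have "\<dots> = dist y x + t * norm v" using t by (simp add: dist_norm)
      finally show ?thesis .
    qed
    hence b1: "y + t *\<^sub>R v \<in> ball x e" using y tv d_def by (simp add: dist_commute)
    have b2: "y \<in> ball x e" using y d_def e by (simp add: dist_commute)
    have "\<bar>g (y + t *\<^sub>R v) - g y\<bar> \<le> K * dist (y + t *\<^sub>R v) y" using L b1 b2 by blast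
    also have "dist (y + t *\<^sub>R v) y = t * norm v" using t by (simp add: dist_norm)
    finally have "g (y + t *\<^sub>R v) - g y \<le> (K * norm v) * t" by (simp add: abs_le_iff algebra_simps)
    hence "(g (y + t *\<^sub>R v) - g y) / t \<le> K * norm v" using t by (simp add: divide_le_eq)
    thus "(g (y + t *\<^sub>R v) - g y) / t \<le> K * norm v + \<epsilon>" using \<open>\<epsilon> > 0\<close> by simp
  qed
qed

lemma lip_not_ple:
  assumes e: "e > 0" and K: "K \<ge> 0" and L: "\<forall>y\<in>ball x e. \<forall>z\<in>ball x e. \<bar>g y - g z\<bar> \<le> K * dist y z"
    and r: "r < - K * norm v"
  shows "\<not> ple g x v r"
proof
  assume "ple g x v r"
  then obtain d where d: "d > 0" "\<forall>y t. dist y x < d \<longrightarrow> 0 < t \<longrightarrow> t < d \<longrightarrow>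
       (g (y + t *\<^sub>R v) - g y) / t \<le> r + (- K * norm v - r) / 2"
  proof -
    have "(- K * norm v - r) / 2 > 0" using r by simp
    thus ?thesis using pleD[OF \<open>ple g x v r\<close>] that by blast
  qed
  have nv: "norm v + 1 > 0" by (smt (verit) norm_ge_zero)
  define t where "t = min (d/2) (e / (2 * (norm v + 1)))"
  have t: "t > 0" "t < d" using d e nv by (auto simp: t_def)
  have tv: "t * norm v < e"
  proof -
    have "t * norm v \<le> t * (norm v + 1)" using t by simp
    also have "\<dots> \<le> e / (2 * (norm v + 1)) * (norm v + 1)"
      using t t_def nv by (intro mult_right_mono) auto
    also have "\<dots> = e / 2" using nv by (simp add: field_simps)
    finally show ?thesis using e by simp
  qed
  have b1: "x + t *\<^sub>R v \<in> ball x e" using tv t by (simp add: dist_norm)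
  have b2: "x \<in> ball x e" using e by simp
  have "\<bar>g (x + t *\<^sub>R v) - g x\<bar> \<le> K * dist (x + t *\<^sub>R v) x" using L b1 b2 by blast
  also have "dist (x + t *\<^sub>R v) x = t * norm v" using t by (simp add: dist_norm)
  finally have "- (K * norm v) * t \<le> g (x + t *\<^sub>R v) - g x" by (simp add: abs_le_iff algebra_simps)
  hence "- (K * norm v) \<le> (g (x + t *\<^sub>R v) - g x) / t" using t by (simp add: le_divide_eq)
  moreover have "(g (x + t *\<^sub>R v) - g x) / t \<le> r + (- K * norm v - r) / 2" using d t by simp
  moreover have "r + (- K * norm v - r) / 2 < - (K * norm v)" using r by (simp add: field_simps)
  ultimately show False by linarith
qed

definition cdr :: "('a::real_normed_vector \<Rightarrow> real) \<Rightarrow> 'a \<Rightarrow> 'a \<Rightarrow> real" where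
  "cdr g x v = real_of_ereal (clarke_dd g x v)"

lemma cdd_finite:
  assumes "loc_lipschitz g"
  obtains K where "K \<ge> 0" "\<And>v. clarke_dd g x v = ereal (cdr g x v)" "\<And>v. cdr g x v \<le> K * norm v"
    "\<And>v. ple g x v (cdr g x v)"
proof -
  obtain e K where eK: "e > 0" "K \<ge> 0" "\<forall>y\<in>ball x e. \<forall>z\<in>ball x e. \<bar>g y - g z\<bar> \<le> K * dist y z"
    using loc_lip_get[OF assms] by blast
  have fin: "clarke_dd g x v = ereal (cdr g x v) \<and> cdr g x v \<le> K * norm v" for v
  proof -
    have up: "clarke_dd g x v \<le> ereal (K * norm v)"
      using lip_ple[OF eK] cdd_le_iff by blast
    have "clarke_dd g x v \<noteq> - \<infinity>"
    proof
      assume "clarke_dd g x v = - \<infinity>"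
      hence "clarke_dd g x v \<le> ereal (- K * norm v - 1)" by simp
      hence "ple g x v (- K * norm v - 1)" using cdd_le_iff by blast
      thus False using lip_not_ple[OF eK, of "- K * norm v - 1" v] by simp
    qed
    moreover have "clarke_dd g x v \<noteq> \<infinity>" using up by auto
    ultimately obtain r where r: "clarke_dd g x v = ereal r" by (cases "clarke_dd g x v") auto
    thus ?thesis using up by (simp add: cdr_def)
  qed
  show ?thesis
  proof (rule that[of K])
    show "K \<ge> 0" using eK by simp
    fix v
    show "clarke_dd g x v = ereal (cdr g x v)" "cdr g x v \<le> K * norm v" using fin by auto
    have "clarke_dd g x v \<le> ereal (cdr g x v)" using fin by simp
    thus "ple g x v (cdr g x v)" using cdd_le_iff by blast
  qed
qed



definition hb_good :: "('x::real_vector \<Rightarrow> real) \<Rightarrow> ('x \<times> real) set \<Rightarrow> ('x \<times> real) set \<Rightarrow> bool" where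
  "hb_good p G0 G \<longleftrightarrow>
    (\<forall>x a b. (x,a)\<in>G \<longrightarrow> (x,b)\<in>G \<longrightarrow> a = b) \<and>
    (\<forall>x a y b. (x,a)\<in>G \<longrightarrow> (y,b)\<in>G \<longrightarrow> (x+y,a+b)\<in>G) \<and>
    (\<forall>x a c. (x,a)\<in>G \<longrightarrow> (c *\<^sub>R x, c*a)\<in>G) \<and>
    (\<forall>x a. (x,a)\<in>G \<longrightarrow> a \<le> p x) \<and> G0 \<subseteq> G"

lemma hb_ext:
  fixes p :: "'x::real_vector \<Rightarrow> real" and T :: "'v::real_vector \<Rightarrow> 'x" and \<eta> :: "'v \<Rightarrow> real"
  assumes T: "linear T" and eta: "linear \<eta>"
    and padd: "\<And>x y. p (x + y) \<le> p x + p y"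
    and pscale: "\<And>c x. c > 0 \<Longrightarrow> p (c *\<^sub>R x) \<le> c * p x"
    and p0: "p 0 \<le> 0"
    and dom: "\<And>u. \<eta> u \<le> p (T u)"
  shows "\<exists>\<xi>. linear \<xi> \<and> (\<forall>u. \<xi> (T u) = \<eta> u) \<and> (\<forall>x. \<xi> x \<le> p x)"
proof -
  have pscale_eq: "p (c *\<^sub>R x) = c * p x" if "c > 0" for c x
  proof -
    have "p x = p ((1/c) *\<^sub>R (c *\<^sub>R x))" using that by simp
    also have "\<dots> \<le> (1/c) * p (c *\<^sub>R x)" using that pscale[of "1/c" "c *\<^sub>R x"] by simp
    finally have "c * p x \<le> p (c *\<^sub>R x)" using that by (simp add: field_simps)
    thus ?thesis using pscale[OF that, of x] by linarith
  qed
  define G0 where "G0 = range (\<lambda>u. (T u, \<eta> u))"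
  define A where "A = {G. hb_good p G0 G}"
  have TL: "T (x + y) = T x + T y" "T (c *\<^sub>R x) = c *\<^sub>R T x" for x y c
    using T by (auto simp: linear_iff)
  have EL: "\<eta> (x + y) = \<eta> x + \<eta> y" "\<eta> (c *\<^sub>R x) = c * \<eta> x" for x y c
    using eta by (auto simp: linear_iff)
  have G0A: "G0 \<in> A"
    unfolding A_def hb_good_def G0_def
  proof (intro CollectI conjI allI impI)
    fix x a b assume x1: "(x, a) \<in> range (\<lambda>u. (T u, \<eta> u))" and x2: "(x, b) \<in> range (\<lambda>u. (T u, \<eta> u))"
    from x1 obtain u1 where u1: "x = T u1" "a = \<eta> u1" by auto
    from x2 obtain u2 where u2: "x = T u2" "b = \<eta> u2" by auto
    note u = u1 u2
    have "T (u1 - u2) = 0" using u linear_diff[OF T] by simp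
    hence "\<eta> (u1 - u2) \<le> 0" using dom[of "u1 - u2"] p0 by simp
    moreover have "T (u2 - u1) = 0" using u linear_diff[OF T] by simp
    hence "\<eta> (u2 - u1) \<le> 0" using dom[of "u2 - u1"] p0 by simp
    ultimately show "a = b" using u linear_diff[OF eta] by simp
  next
    fix x a y b assume "(x, a) \<in> range (\<lambda>u. (T u, \<eta> u))" "(y, b) \<in> range (\<lambda>u. (T u, \<eta> u))"
    then obtain u1 u2 where u: "x = T u1" "a = \<eta> u1" "y = T u2" "b = \<eta> u2" by auto
    show "(x + y, a + b) \<in> range (\<lambda>u. (T u, \<eta> u))" using u TL EL
      by (auto intro!: image_eqI[of _ _ "u1 + u2"])
  next
    fix x a c assume "(x, a) \<in> range (\<lambda>u. (T u, \<eta> u))"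
    then obtain u1 where u: "x = T u1" "a = \<eta> u1" by auto
    show "(c *\<^sub>R x, c * a) \<in> range (\<lambda>u. (T u, \<eta> u))" using u TL EL
      by (auto intro!: image_eqI[of _ _ "c *\<^sub>R u1"])
  next
    fix x a assume "(x, a) \<in> range (\<lambda>u. (T u, \<eta> u))"
    thus "a \<le> p x" using dom by auto
  qed simp
  have "\<exists>M\<in>A. \<forall>X\<in>A. M \<subseteq> X \<longrightarrow> X = M"
  proof (rule Zorn_Lemma2, intro ballI)
    fix C assume C: "C \<in> chains A"
    show "\<exists>U\<in>A. \<forall>X\<in>C. X \<subseteq> U"
    proof (cases "C = {}")
      case True thus ?thesis using G0A by auto
    next
      case False
      have CA: "C \<subseteq> A" and ch: "\<forall>X\<in>C. \<forall>Y\<in>C. X \<subseteq> Y \<or> Y \<subseteq> X"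
        using C unfolding chains_def chain_subset_def by auto
      have two: "\<exists>X\<in>C. P1 \<in> X \<and> P2 \<in> X" if "P1 \<in> \<Union>C" "P2 \<in> \<Union>C" for P1 P2
      proof -
        from that obtain X Y where "X \<in> C" "Y \<in> C" "P1 \<in> X" "P2 \<in> Y" by auto
        thus ?thesis using ch by blast
      qed
      have "\<Union>C \<in> A" unfolding A_def hb_good_def
      proof (intro CollectI conjI allI impI)
        fix x a b assume "(x, a) \<in> \<Union>C" "(x, b) \<in> \<Union>C"
        then obtain X where "X \<in> C" "(x, a) \<in> X" "(x, b) \<in> X" using two by blast
        thus "a = b" using CA unfolding A_def hb_good_def by blast
      next
        fix x a y b assume "(x, a) \<in> \<Union>C" "(y, b) \<in> \<Union>C"
        then obtain X where "X \<in> C" "(x, a) \<in> X" "(y, b) \<in> X" using two by blast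
        thus "(x + y, a + b) \<in> \<Union>C" using CA unfolding A_def hb_good_def by blast
      next
        fix x a c assume "(x, a) \<in> \<Union>C"
        then obtain X where "X \<in> C" "(x, a) \<in> X" by blast
        thus "(c *\<^sub>R x, c * a) \<in> \<Union>C" using CA unfolding A_def hb_good_def by blast
      next
        fix x a assume "(x, a) \<in> \<Union>C"
        then obtain X where "X \<in> C" "(x, a) \<in> X" by blast
        thus "a \<le> p x" using CA unfolding A_def hb_good_def by blast
      next
        from False obtain X where "X \<in> C" by blast
        thus "G0 \<subseteq> \<Union>C" using CA unfolding A_def hb_good_def by blast
      qed
      thus ?thesis by blast
    qed
  qed
  then obtain M where MA: "M \<in> A" and Mmax: "\<forall>X\<in>A. M \<subseteq> X \<longrightarrow> X = M" by blast
  have Mfun: "\<And>x a b. (x,a)\<in>M \<Longrightarrow> (x,b)\<in>M \<Longrightarrow> a = b"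
    and Madd: "\<And>x a y b. (x,a)\<in>M \<Longrightarrow> (y,b)\<in>M \<Longrightarrow> (x+y,a+b)\<in>M"
    and Mscale: "\<And>x a c. (x,a)\<in>M \<Longrightarrow> (c *\<^sub>R x, c*a)\<in>M"
    and Mdom: "\<And>x a. (x,a)\<in>M \<Longrightarrow> a \<le> p x"
    and MG0: "G0 \<subseteq> M"
    using MA unfolding A_def hb_good_def by blast+
  have M00: "(0, 0) \<in> M" using MG0 unfolding G0_def using TL(2)[of 0 0] EL(2)[of 0 0] by auto
  have full: "\<exists>a. (x0, a) \<in> M" for x0
  proof (rule ccontr)
    assume nx0: "\<nexists>a. (x0, a) \<in> M"
    define S1 where "S1 = {a - p (y - x0) | y a. (y, a) \<in> M}"
    have key: "a - p (y - x0) \<le> p (z + x0) - b" if "(y, a) \<in> M" "(z, b) \<in> M" for y a z b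
    proof -
      have "a + b \<le> p (y + z)" using Madd[OF that] Mdom by blast
      also have "\<dots> = p ((y - x0) + (z + x0))" by (simp add: algebra_simps)
      also have "\<dots> \<le> p (y - x0) + p (z + x0)" by (rule padd)
      finally show ?thesis by simp
    qed
    have S1ne: "S1 \<noteq> {}" using M00 unfolding S1_def by blast
    have S1bdd: "bdd_above S1" unfolding S1_def bdd_above_def
      using key[OF _ M00] by blast
    define c where "c = Sup S1"
    have c_ge: "a - p (y - x0) \<le> c" if "(y, a) \<in> M" for y a
      unfolding c_def using that S1bdd by (intro cSup_upper) (auto simp: S1_def)
    have c_le: "c \<le> p (z + x0) - b" if "(z, b) \<in> M" for z b
      unfolding c_def using S1ne key[OF _ that] by (intro cSup_least) (auto simp: S1_def)
    define M' where "M' = {(y + t *\<^sub>R x0, a + t * c) | y a t. (y, a) \<in> M}"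
    have inM': "(y + t *\<^sub>R x0, a + t * c) \<in> M'" if "(y, a) \<in> M" for y a t
      using that unfolding M'_def by blast
    have MM': "P \<in> M'" if "P \<in> M" for P
    proof -
      obtain y a where "P = (y, a)" by force
      thus ?thesis using inM'[of y a 0] that by simp
    qed
    have "M' \<in> A" unfolding A_def hb_good_def
    proof (intro CollectI conjI allI impI)
      fix x a b assume "(x, a) \<in> M'" "(x, b) \<in> M'"
      then obtain y1 a1 t1 y2 a2 t2 where e: "x = y1 + t1 *\<^sub>R x0" "a = a1 + t1 * c" "(y1, a1) \<in> M"
        "x = y2 + t2 *\<^sub>R x0" "b = a2 + t2 * c" "(y2, a2) \<in> M" unfolding M'_def by blast
      have t: "t1 = t2"
      proof (rule ccontr)
        assume ne: "t1 \<noteq> t2"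
        have "(y2 + (-1) *\<^sub>R y1, a2 + (-1) * a1) \<in> M" using Madd[OF e(6) Mscale[OF e(3)]] .
        hence "((1 / (t1 - t2)) *\<^sub>R (y2 + (-1) *\<^sub>R y1), (1 / (t1 - t2)) * (a2 + (-1) * a1)) \<in> M"
          by (rule Mscale)
        moreover have "(1 / (t1 - t2)) *\<^sub>R (y2 + (-1) *\<^sub>R y1) = x0"
        proof -
          have "y2 + (-1) *\<^sub>R y1 = (t1 - t2) *\<^sub>R x0" using e(1,4)
            by (simp add: algebra_simps)
          thus ?thesis using ne by simp
        qed
        ultimately have "(x0, (1 / (t1 - t2)) * (a2 + (-1) * a1)) \<in> M" by simp
        thus False using nx0 by blast
      qed
      hence "y1 = y2" using e by simp
      thus "a = b" using e t Mfun by blast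
    next
      fix x a y b assume "(x, a) \<in> M'" "(y, b) \<in> M'"
      then obtain y1 a1 t1 y2 a2 t2 where e: "x = y1 + t1 *\<^sub>R x0" "a = a1 + t1 * c" "(y1, a1) \<in> M"
        "y = y2 + t2 *\<^sub>R x0" "b = a2 + t2 * c" "(y2, a2) \<in> M" unfolding M'_def by blast
      have "(y1 + y2, a1 + a2) \<in> M" using Madd e by blast
      moreover have "x + y = (y1 + y2) + (t1 + t2) *\<^sub>R x0" "a + b = (a1 + a2) + (t1 + t2) * c"
        using e by (simp_all add: algebra_simps)
      ultimately show "(x + y, a + b) \<in> M'" unfolding M'_def by blast
    next
      fix x a r assume "(x, a) \<in> M'"
      then obtain y1 a1 t1 where e: "x = y1 + t1 *\<^sub>R x0" "a = a1 + t1 * c" "(y1, a1) \<in> M"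
        unfolding M'_def by blast
      have "(r *\<^sub>R y1, r * a1) \<in> M" using Mscale e by blast
      moreover have "r *\<^sub>R x = r *\<^sub>R y1 + (r * t1) *\<^sub>R x0" "r * a = r * a1 + (r * t1) * c"
        using e by (simp_all add: algebra_simps)
      ultimately show "(r *\<^sub>R x, r * a) \<in> M'" unfolding M'_def by blast
    next
      fix x a assume "(x, a) \<in> M'"
      then obtain y a1 t where e: "x = y + t *\<^sub>R x0" "a = a1 + t * c" "(y, a1) \<in> M"
        unfolding M'_def by blast
      consider "t = 0" | "t > 0" | "t < 0" by linarith
      thus "a \<le> p x"
      proof cases
        case 1 thus ?thesis using e Mdom by simp
      next
        case 2
        have m: "((1/t) *\<^sub>R y, (1/t) * a1) \<in> M" using Mscale e by blast
        have "c \<le> p ((1/t) *\<^sub>R y + x0) - (1/t) * a1" using c_le[OF m] .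
        hence "t * c \<le> t * p ((1/t) *\<^sub>R y + x0) - a1" using 2
          by (simp add: field_simps)
        also have "t * p ((1/t) *\<^sub>R y + x0) = p (t *\<^sub>R ((1/t) *\<^sub>R y + x0))"
          using pscale_eq[OF 2] by simp
        also have "t *\<^sub>R ((1/t) *\<^sub>R y + x0) = x" using 2 e by (simp add: algebra_simps)
        finally show ?thesis using e by simp
      next
        case 3
        define s where "s = - t"
        have s: "s > 0" using 3 s_def by simp
        have m: "((1/s) *\<^sub>R y, (1/s) * a1) \<in> M" using Mscale e by blast
        have "(1/s) * a1 - p ((1/s) *\<^sub>R y - x0) \<le> c" using c_ge[OF m] .
        hence "a1 - s * p ((1/s) *\<^sub>R y - x0) \<le> s * c" using s
          by (simp add: field_simps)
        moreover have "s * p ((1/s) *\<^sub>R y - x0) = p (s *\<^sub>R ((1/s) *\<^sub>R y - x0))"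
          using pscale_eq[OF s] by simp
        moreover have "s *\<^sub>R ((1/s) *\<^sub>R y - x0) = x" using s e s_def by (simp add: algebra_simps)
        ultimately show ?thesis using e s_def by simp
      qed
    next
      show "G0 \<subseteq> M'" using MG0 MM' by blast
    qed
    moreover have "M \<subseteq> M'"
      using MM' by blast
    ultimately have "M' = M" using Mmax by blast
    moreover have "(x0, c) \<in> M'" using inM'[OF M00, of 1] by simp
    ultimately show False using nx0 by blast
  qed
  define \<xi> where "\<xi> x = (THE a. (x, a) \<in> M)" for x
  have xiM: "(x, \<xi> x) \<in> M" for x
  proof -
    obtain a where a: "(x, a) \<in> M" using full[of x] by blast
    show ?thesis unfolding \<xi>_def by (rule theI[of "\<lambda>a. (x, a) \<in> M" a]) (use a Mfun in blast)+
  qed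
  have xi_eq: "\<xi> x = a" if "(x, a) \<in> M" for x a using Mfun[OF that xiM] by simp
  have "linear \<xi>" unfolding linear_iff
    using xi_eq[OF Madd[OF xiM xiM]] xi_eq[OF Mscale[OF xiM]] by simp
  moreover have "\<xi> (T u) = \<eta> u" for u
    using MG0 xi_eq unfolding G0_def by blast
  moreover have "\<xi> x \<le> p x" for x using Mdom xiM by blast
  ultimately show ?thesis by blast
qed



lemma dini_up:
  fixes h :: "real \<Rightarrow> real"
  assumes cont: "continuous_on {a..b} h" and ab: "a < b" and gt: "h b - h a > r * (b - a)"
  shows "\<exists>s. a \<le> s \<and> s < b \<and> (\<forall>u. s < u \<and> u \<le> b \<longrightarrow> h u - h s > r * (u - s))"
proof -
  define \<phi> where "\<phi> u = h u - r * u" for u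
  have c\<phi>: "continuous_on {a..b} \<phi>" unfolding \<phi>_def
    by (intro continuous_intros cont)
  define S where "S = {a..b} \<inter> \<phi> -` {..\<phi> a}"
  have "closed S" unfolding S_def by (rule continuous_closed_preimage[OF c\<phi>]) auto
  moreover have "bounded S" unfolding S_def by (rule bounded_subset[of "{a..b}"]) auto
  ultimately have "compact S" by (simp add: compact_eq_bounded_closed)
  moreover have "a \<in> S" using ab unfolding S_def by auto
  ultimately obtain s where s: "s \<in> S" "\<forall>t\<in>S. t \<le> s" using compact_attains_sup[of S] by blast
  have sb: "s \<noteq> b"
  proof
    assume "s = b"
    hence "\<phi> b \<le> \<phi> a" using s unfolding S_def by auto
    thus False using gt unfolding \<phi>_def by (simp add: algebra_simps)
  qed
  show ?thesis
  proof (intro exI[of _ s] conjI allI impI)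
    show "a \<le> s" "s < b" using s sb unfolding S_def by auto
    fix u assume u: "s < u \<and> u \<le> b"
    have "u \<notin> S" using s u by force
    hence "\<phi> u > \<phi> a" using u s unfolding S_def by auto
    moreover have "\<phi> s \<le> \<phi> a" using s unfolding S_def by auto
    ultimately show "h u - h s > r * (u - s)" unfolding \<phi>_def by (simp add: algebra_simps)
  qed
qed

lemma dini_down:
  fixes h :: "real \<Rightarrow> real"
  assumes cont: "continuous_on {a..b} h" and ab: "a < b" and lt: "h b - h a < r * (b - a)"
  shows "\<exists>t. a \<le> t \<and> t < b \<and> (\<forall>u. t < u \<and> u \<le> b \<longrightarrow> h u - h t < r * (u - t))"
proof -
  have "continuous_on {a..b} (\<lambda>u. - h u)" by (intro continuous_intros cont)
  moreover have "(- h b) - (- h a) > (- r) * (b - a)" using lt by simp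
  ultimately obtain t where "a \<le> t \<and> t < b \<and> (\<forall>u. t < u \<and> u \<le> b \<longrightarrow> (- h u) - (- h t) > (- r) * (u - t))"
    using dini_up[of a b "\<lambda>u. - h u" "- r"] ab by blast
  thus ?thesis by (intro exI[of _ t]) auto
qed

lemma conv1d:
  fixes h :: "real \<Rightarrow> real"
  assumes cont: "continuous_on UNIV h"
    and P: "\<And>s t. s < t \<Longrightarrow> \<exists>K. \<forall>e>0. \<exists>d>0. \<forall>\<mu>. 0 < \<mu> \<and> \<mu> < d \<longrightarrow>
        h (s + \<mu>) - h s \<le> (K + e) * \<mu> \<and> h (t + \<mu>) - h t \<ge> (K - e) * \<mu>"
    and am: "a < m" and mb: "m < b"
  shows "(h m - h a) / (m - a) \<le> (h b - h m) / (b - m)"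
proof (rule ccontr)
  define s1 where "s1 = (h m - h a) / (m - a)"
  define s2 where "s2 = (h b - h m) / (b - m)"
  assume "\<not> ?thesis"
  hence gap: "s1 > s2" unfolding s1_def s2_def by simp
  define \<sigma> where "\<sigma> = s1 - s2"
  have \<sigma>: "\<sigma> > 0" using gap \<sigma>_def by simp
  define r1 where "r1 = s1 - \<sigma> / 4"
  define r2 where "r2 = s2 + \<sigma> / 4"
  have "h m - h a = s1 * (m - a)" using am unfolding s1_def by simp
  moreover have "r1 * (m - a) = s1 * (m - a) - \<sigma> * (m - a) / 4" unfolding r1_def by (simp add: algebra_simps)
  moreover have "\<sigma> * (m - a) > 0" using am \<sigma> by simp
  ultimately have "h m - h a > r1 * (m - a)" by linarith
  then obtain s where s: "a \<le> s" "s < m" "\<forall>u. s < u \<and> u \<le> m \<longrightarrow> h u - h s > r1 * (u - s)"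
    using dini_up[of a m h r1] am continuous_on_subset[OF cont] by blast
  have "h b - h m = s2 * (b - m)" using mb unfolding s2_def by simp
  moreover have "r2 * (b - m) = s2 * (b - m) + \<sigma> * (b - m) / 4" unfolding r2_def by (simp add: algebra_simps)
  moreover have "\<sigma> * (b - m) > 0" using mb \<sigma> by simp
  ultimately have "h b - h m < r2 * (b - m)" by linarith
  then obtain t where t: "m \<le> t" "t < b" "\<forall>u. t < u \<and> u \<le> b \<longrightarrow> h u - h t < r2 * (u - t)"
    using dini_down[of m b h r2] mb continuous_on_subset[OF cont] by blast
  have st: "s < t" using s t by simp
  obtain K where K: "\<forall>e>0. \<exists>d>0. \<forall>\<mu>. 0 < \<mu> \<and> \<mu> < d \<longrightarrow>
        h (s + \<mu>) - h s \<le> (K + e) * \<mu> \<and> h (t + \<mu>) - h t \<ge> (K - e) * \<mu>" using P[OF st] by blast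
  obtain d where d: "d > 0" "\<forall>\<mu>. 0 < \<mu> \<and> \<mu> < d \<longrightarrow>
        h (s + \<mu>) - h s \<le> (K + \<sigma>/8) * \<mu> \<and> h (t + \<mu>) - h t \<ge> (K - \<sigma>/8) * \<mu>"
  proof -
    have "\<sigma> / 8 > 0" using \<sigma> by simp
    thus ?thesis using K that by blast
  qed
  define \<mu> where "\<mu> = min (d/2) (min (m - s) (b - t))"
  have \<mu>: "0 < \<mu>" "\<mu> < d" "\<mu> \<le> m - s" "\<mu> \<le> b - t" using d s t unfolding \<mu>_def by auto
  have "r1 * \<mu> < h (s + \<mu>) - h s" using s(3)[rule_format, of "s + \<mu>"] \<mu> by simp
  also have "\<dots> \<le> (K + \<sigma>/8) * \<mu>" using d \<mu> by blast
  finally have 1: "r1 < K + \<sigma>/8" using \<mu> by (simp add: mult_less_cancel_right)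
  have "(K - \<sigma>/8) * \<mu> \<le> h (t + \<mu>) - h t" using d \<mu> by blast
  also have "\<dots> < r2 * \<mu>" using t(3)[rule_format, of "t + \<mu>"] \<mu> by simp
  finally have 2: "K - \<sigma>/8 < r2" using \<mu> by (simp add: mult_less_cancel_right)
  show False using 1 2 gap unfolding r1_def r2_def \<sigma>_def by (simp add: field_simps)
qed



lemma P_from_ple:
  fixes G :: "'x::real_normed_vector \<Rightarrow> real" and p d :: 'x
  assumes st: "s < t" and c: "c \<ge> 0" and ab: "\<alpha> + \<beta> \<le> c * (t - s)^2"
    and p1: "ple G (p + s *\<^sub>R d) ((t - s) *\<^sub>R d) \<alpha>"
    and p2: "ple G (p + t *\<^sub>R d) ((s - t) *\<^sub>R d) \<beta>"
  shows "\<exists>K. \<forall>e>0. \<exists>\<delta>>0. \<forall>\<mu>. 0 < \<mu> \<and> \<mu> < \<delta> \<longrightarrow>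
      (G (p + (s + \<mu>) *\<^sub>R d) + c/2 * (s + \<mu>)^2) - (G (p + s *\<^sub>R d) + c/2 * s^2) \<le> (K + e) * \<mu> \<and>
      (G (p + (t + \<mu>) *\<^sub>R d) + c/2 * (t + \<mu>)^2) - (G (p + t *\<^sub>R d) + c/2 * t^2) \<ge> (K - e) * \<mu>"
proof -
  define D where "D = t - s"
  have D: "D > 0" using st D_def by simp
  show ?thesis
  proof (rule exI[of _ "\<alpha> / D + c * s"], intro allI impI)
    fix e :: real assume e: "e > 0"
    define e1 where "e1 = e * D / 2"
    have e1: "e1 > 0" using e D unfolding e1_def by simp
    obtain \<delta>1 where \<delta>1: "\<delta>1 > 0" "\<forall>y \<tau>. dist y (p + s *\<^sub>R d) < \<delta>1 \<longrightarrow> 0 < \<tau> \<longrightarrow> \<tau> < \<delta>1 \<longrightarrow>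
       (G (y + \<tau> *\<^sub>R ((t - s) *\<^sub>R d)) - G y) / \<tau> \<le> \<alpha> + e1"
      using pleD[OF p1 e1] by blast
    obtain \<delta>2 where \<delta>2: "\<delta>2 > 0" "\<forall>y \<tau>. dist y (p + t *\<^sub>R d) < \<delta>2 \<longrightarrow> 0 < \<tau> \<longrightarrow> \<tau> < \<delta>2 \<longrightarrow>
       (G (y + \<tau> *\<^sub>R ((s - t) *\<^sub>R d)) - G y) / \<tau> \<le> \<beta> + e1"
      using pleD[OF p2 e1] by blast
    have nd: "norm d + 1 > 0" by (smt (verit) norm_ge_zero)
    define \<delta> where "\<delta> = min (min (\<delta>1 * D) (\<delta>2 * D)) (min (\<delta>2 / (norm d + 1)) (e / (c + 1)))"
    have \<delta>: "\<delta> > 0" unfolding \<delta>_def using \<delta>1 \<delta>2 D nd e c by auto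
    show "\<exists>\<delta>>0. \<forall>\<mu>. 0 < \<mu> \<and> \<mu> < \<delta> \<longrightarrow>
      (G (p + (s + \<mu>) *\<^sub>R d) + c/2 * (s + \<mu>)^2) - (G (p + s *\<^sub>R d) + c/2 * s^2) \<le> (\<alpha> / D + c * s + e) * \<mu> \<and>
      (G (p + (t + \<mu>) *\<^sub>R d) + c/2 * (t + \<mu>)^2) - (G (p + t *\<^sub>R d) + c/2 * t^2) \<ge> (\<alpha> / D + c * s - e) * \<mu>"
    proof (intro exI[of _ \<delta>] conjI \<delta> allI impI)
      fix \<mu> assume \<mu>: "0 < \<mu> \<and> \<mu> < \<delta>"
      have \<mu>b: "\<mu> < \<delta>1 * D" "\<mu> < \<delta>2 * D" "\<mu> < \<delta>2 / (norm d + 1)" "\<mu> < e / (c + 1)"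
        using \<mu> unfolding \<delta>_def by auto
      define \<tau> where "\<tau> = \<mu> / D"
      have \<tau>: "\<tau> > 0" "\<tau> * D = \<mu>" using \<mu> D \<tau>_def by auto
      have \<tau>1: "\<tau> < \<delta>1" using \<mu>b(1) D unfolding \<tau>_def by (simp add: divide_less_eq)
      have \<tau>2: "\<tau> < \<delta>2" using \<mu>b(2) D unfolding \<tau>_def by (simp add: divide_less_eq)
      have cmu: "c * \<mu> \<le> e"
      proof -
        have "c * \<mu> \<le> (c + 1) * \<mu>" using \<mu> by simp
        also have "\<dots> \<le> (c + 1) * (e / (c + 1))" using \<mu>b(4) c by (intro mult_left_mono) auto
        also have "\<dots> = e" using c by simp
        finally show ?thesis .
      qed
      have sq1: "c/2 * (s + \<mu>)^2 - c/2 * s^2 = c * s * \<mu> + (c * \<mu>) * \<mu> / 2"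
        by (simp add: power2_eq_square algebra_simps)
      have sq2: "c/2 * (t + \<mu>)^2 - c/2 * t^2 = c * t * \<mu> + (c * \<mu>) * \<mu> / 2"
        by (simp add: power2_eq_square algebra_simps)
      have cmu2: "0 \<le> (c * \<mu>) * \<mu> / 2" "(c * \<mu>) * \<mu> / 2 \<le> e / 2 * \<mu>"
        using cmu \<mu> c by (auto intro: mult_right_mono)
      have v1: "(p + s *\<^sub>R d) + \<tau> *\<^sub>R ((t - s) *\<^sub>R d) = p + (s + \<mu>) *\<^sub>R d"
      proof -
        have "\<tau> *\<^sub>R ((t - s) *\<^sub>R d) = \<mu> *\<^sub>R d" using \<tau>(2) D_def by simp
        thus ?thesis by (simp add: scaleR_add_left add.assoc)
      qed
      have "(G ((p + s *\<^sub>R d) + \<tau> *\<^sub>R ((t - s) *\<^sub>R d)) - G (p + s *\<^sub>R d)) / \<tau> \<le> \<alpha> + e1"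
        using \<delta>1(2) \<tau> \<tau>1 by simp
      hence "G (p + (s + \<mu>) *\<^sub>R d) - G (p + s *\<^sub>R d) \<le> (\<alpha> + e1) * \<tau>"
        unfolding v1 by (rule pos_divide_le_eq[OF \<tau>(1), THEN iffD1])
      also have "(\<alpha> + e1) * \<tau> = (\<alpha> / D + e / 2) * \<mu>"
        using D unfolding \<tau>_def e1_def by (simp add: field_simps)
      finally have g1: "G (p + (s + \<mu>) *\<^sub>R d) - G (p + s *\<^sub>R d) \<le> (\<alpha> / D + e / 2) * \<mu>" .
      show "(G (p + (s + \<mu>) *\<^sub>R d) + c/2 * (s + \<mu>)^2) - (G (p + s *\<^sub>R d) + c/2 * s^2) \<le> (\<alpha> / D + c * s + e) * \<mu>"
      proof -
        have "(G (p + (s + \<mu>) *\<^sub>R d) + c/2 * (s + \<mu>)^2) - (G (p + s *\<^sub>R d) + c/2 * s^2)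
            = (G (p + (s + \<mu>) *\<^sub>R d) - G (p + s *\<^sub>R d)) + (c * s * \<mu> + (c * \<mu>) * \<mu> / 2)"
          using sq1 by simp
        also have "\<dots> \<le> (\<alpha> / D + e / 2) * \<mu> + (c * s * \<mu> + e / 2 * \<mu>)" using g1 cmu2 by simp
        also have "\<dots> = (\<alpha> / D + c * s + e) * \<mu>" by (simp add: algebra_simps)
        finally show ?thesis .
      qed
      have v2: "(p + (t + \<mu>) *\<^sub>R d) + \<tau> *\<^sub>R ((s - t) *\<^sub>R d) = p + t *\<^sub>R d"
      proof -
        have "\<tau> * (s - t) = - \<mu>" using \<tau>(2) D_def by (simp add: algebra_simps)
        hence "\<tau> *\<^sub>R ((s - t) *\<^sub>R d) = (- \<mu>) *\<^sub>R d" by simp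
        thus ?thesis by (simp add: algebra_simps)
      qed
      have dist2: "dist (p + (t + \<mu>) *\<^sub>R d) (p + t *\<^sub>R d) < \<delta>2"
      proof -
        have "dist (p + (t + \<mu>) *\<^sub>R d) (p + t *\<^sub>R d) = \<mu> * norm d"
          using \<mu> by (simp add: dist_norm algebra_simps)
        also have "\<dots> \<le> \<mu> * (norm d + 1)" using \<mu> by simp
        also have "\<dots> < \<delta>2 / (norm d + 1) * (norm d + 1)"
          using \<mu>b(3) nd by (intro mult_strict_right_mono) auto
        also have "\<dots> = \<delta>2" using nd by simp
        finally show ?thesis .
      qed
      have "(G ((p + (t + \<mu>) *\<^sub>R d) + \<tau> *\<^sub>R ((s - t) *\<^sub>R d)) - G (p + (t + \<mu>) *\<^sub>R d)) / \<tau> \<le> \<beta> + e1"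
        using \<delta>2(2) \<tau> \<tau>2 dist2 by simp
      hence "G (p + t *\<^sub>R d) - G (p + (t + \<mu>) *\<^sub>R d) \<le> (\<beta> + e1) * \<tau>"
        unfolding v2 by (rule pos_divide_le_eq[OF \<tau>(1), THEN iffD1])
      also have "(\<beta> + e1) * \<tau> = (\<beta> / D + e / 2) * \<mu>"
        using D unfolding \<tau>_def e1_def by (simp add: field_simps)
      finally have g2: "G (p + t *\<^sub>R d) - G (p + (t + \<mu>) *\<^sub>R d) \<le> (\<beta> / D + e / 2) * \<mu>" .
      have bD: "- \<beta> / D \<ge> \<alpha> / D - c * D"
      proof -
        have "- \<beta> \<ge> \<alpha> - c * D^2" using ab D_def by simp
        hence "(\<alpha> - c * D^2) / D \<le> (- \<beta>) / D" by (rule divide_right_mono) (use D in simp)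
        moreover have "(\<alpha> - c * D^2) / D = \<alpha> / D - c * D" using D by (simp add: field_simps power2_eq_square)
        ultimately show ?thesis by simp
      qed
      have mb: "- \<beta> / D = - (\<beta> / D)" by simp
      have "\<alpha> / D - c * D - e / 2 \<le> - (\<beta> / D + e / 2)" using bD mb by (smt (verit))
      hence "(\<alpha> / D - c * D - e / 2) * \<mu> \<le> - (\<beta> / D + e / 2) * \<mu>"
        using \<mu> by (intro mult_right_mono) auto
      hence bD2: "(\<alpha> / D - c * D - e / 2) * \<mu> \<le> - ((\<beta> / D + e / 2) * \<mu>)" by (simp only: mult_minus_left)
      have ident: "(\<alpha> / D + c * s - e) * \<mu> = (\<alpha> / D - c * D - e / 2) * \<mu> + c * t * \<mu> - e / 2 * \<mu>"
        unfolding D_def by (simp add: algebra_simps)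
      have ep: "e / 2 * \<mu> \<ge> 0" using e \<mu> by simp
      show "(G (p + (t + \<mu>) *\<^sub>R d) + c/2 * (t + \<mu>)^2) - (G (p + t *\<^sub>R d) + c/2 * t^2) \<ge> (\<alpha> / D + c * s - e) * \<mu>"
        using g2 bD2 ident ep cmu2(1) sq2 by (smt (verit))
    qed
  qed
qed



lemma bil_bound:
  fixes A :: "'v::real_normed_vector \<Rightarrow>\<^sub>L ('v \<Rightarrow>\<^sub>L real)"
  shows "\<bar>A a b\<bar> \<le> norm A * norm a * norm b"
proof -
  have "\<bar>A a b\<bar> = norm (A a b)" by simp
  also have "\<dots> \<le> norm (A a) * norm b" by (rule norm_blinfun)
  also have "\<dots> \<le> norm A * norm a * norm b" by (intro mult_right_mono norm_blinfun) auto
  finally show ?thesis .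
qed

lemma ll_add:
  assumes "loc_lipschitz g1" "loc_lipschitz g2"
  shows "loc_lipschitz (\<lambda>x. g1 x + g2 x)"
  unfolding loc_lipschitz_def
proof
  fix x
  obtain e1 K1 where 1: "e1 > 0" "K1 \<ge> 0" "\<forall>y\<in>ball x e1. \<forall>z\<in>ball x e1. \<bar>g1 y - g1 z\<bar> \<le> K1 * dist y z"
    using loc_lip_get[OF assms(1)] by blast
  obtain e2 K2 where 2: "e2 > 0" "K2 \<ge> 0" "\<forall>y\<in>ball x e2. \<forall>z\<in>ball x e2. \<bar>g2 y - g2 z\<bar> \<le> K2 * dist y z"
    using loc_lip_get[OF assms(2)] by blast
  show "\<exists>e>0. \<exists>L. \<forall>y\<in>ball x e. \<forall>z\<in>ball x e. \<bar>g1 y + g2 y - (g1 z + g2 z)\<bar> \<le> L * dist y z"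
  proof (rule exI[of _ "min e1 e2"], intro conjI exI[of _ "K1 + K2"] ballI)
    show "min e1 e2 > 0" using 1 2 by simp
    fix y z assume "y \<in> ball x (min e1 e2)" "z \<in> ball x (min e1 e2)"
    hence "\<bar>g1 y - g1 z\<bar> \<le> K1 * dist y z" "\<bar>g2 y - g2 z\<bar> \<le> K2 * dist y z" using 1 2 by auto
    thus "\<bar>g1 y + g2 y - (g1 z + g2 z)\<bar> \<le> (K1 + K2) * dist y z" by (simp add: abs_le_iff algebra_simps)
  qed
qed

lemma ll_comp:
  fixes T :: "'a::real_normed_vector \<Rightarrow>\<^sub>L 'b::real_normed_vector"
  assumes "loc_lipschitz G"
  shows "loc_lipschitz (\<lambda>v. G (T v))"
  unfolding loc_lipschitz_def
proof
  fix x
  obtain e K where 1: "e > 0" "K \<ge> 0" "\<forall>y\<in>ball (T x) e. \<forall>z\<in>ball (T x) e. \<bar>G y - G z\<bar> \<le> K * dist y z"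
    using loc_lip_get[OF assms] by blast
  have nT: "norm T + 1 > 0" by (smt (verit) norm_ge_zero)
  have tb: "T y \<in> ball (T x) e" if "y \<in> ball x (e / (norm T + 1))" for y
  proof -
    have "dist (T x) (T y) = norm (T (x - y))" by (simp add: dist_norm blinfun.diff_right)
    also have "\<dots> \<le> norm T * norm (x - y)" by (rule norm_blinfun)
    also have "\<dots> \<le> (norm T + 1) * dist x y" by (simp add: dist_norm mult_right_mono)
    also have "\<dots> < (norm T + 1) * (e / (norm T + 1))"
      using that nT by (intro mult_strict_left_mono) auto
    also have "\<dots> = e" using nT by simp
    finally show ?thesis by simp
  qed
  have "\<forall>y\<in>ball x (e / (norm T + 1)). \<forall>z\<in>ball x (e / (norm T + 1)). \<bar>G (T y) - G (T z)\<bar> \<le> (K * norm T) * dist y z"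
  proof (intro ballI)
    fix y z assume y: "y \<in> ball x (e / (norm T + 1))" and z: "z \<in> ball x (e / (norm T + 1))"
    have "\<bar>G (T y) - G (T z)\<bar> \<le> K * dist (T y) (T z)" using 1 tb[OF y] tb[OF z] by blast
    also have "\<dots> \<le> K * (norm T * dist y z)"
      using norm_blinfun[of T "y - z"] 1 by (intro mult_left_mono) (auto simp: dist_norm blinfun.diff_right)
    finally show "\<bar>G (T y) - G (T z)\<bar> \<le> (K * norm T) * dist y z" by (simp add: mult.assoc)
  qed
  moreover have "e / (norm T + 1) > 0" using 1 nT by simp
  ultimately show "\<exists>e>0. \<exists>L. \<forall>y\<in>ball x e. \<forall>z\<in>ball x e. \<bar>G (T y) - G (T z)\<bar> \<le> L * dist y z"
    by blast
qed

lemma half_abs_helper: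
  fixes a b c X Y :: real
  assumes "\<bar>a\<bar> \<le> X" "\<bar>b\<bar> \<le> X" "\<bar>c\<bar> \<le> Y"
  shows "\<bar>1/2 * (a + b) - c\<bar> \<le> X + Y"
  using assms unfolding abs_le_iff by argo

lemma ll_quad:
  fixes A :: "'v::real_normed_vector \<Rightarrow>\<^sub>L ('v \<Rightarrow>\<^sub>L real)" and f :: "'v \<Rightarrow>\<^sub>L real"
  shows "loc_lipschitz (\<lambda>v. 1/2 * A v v - f v)"
  unfolding loc_lipschitz_def
proof
  fix x
  show "\<exists>e>0. \<exists>L. \<forall>y\<in>ball x e. \<forall>z\<in>ball x e. \<bar>1/2 * A y y - f y - (1/2 * A z z - f z)\<bar> \<le> L * dist y z"
  proof (rule exI[of _ 1], intro conjI exI[of _ "norm A * (norm x + 1) + norm f"] ballI)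
    show "(1::real) > 0" by simp
    fix y z assume y: "y \<in> ball x 1" and z: "z \<in> ball x 1"
    have ny: "norm y \<le> norm x + 1" using y norm_triangle_ineq2[of y x]
      by (simp add: dist_norm norm_minus_commute)
    have nz: "norm z \<le> norm x + 1" using z norm_triangle_ineq2[of z x]
      by (simp add: dist_norm norm_minus_commute)
    have id: "1/2 * A y y - f y - (1/2 * A z z - f z) = 1/2 * (A y (y - z) + A (y - z) z) - f (y - z)"
      by (simp add: blinfun.bilinear_simps algebra_simps)
    have b1: "\<bar>A y (y - z)\<bar> \<le> norm A * (norm x + 1) * norm (y - z)"
      using bil_bound[of A y "y - z"] ny
      by (smt (verit, best) mult_left_mono mult_right_mono norm_ge_zero)
    have b2: "\<bar>A (y - z) z\<bar> \<le> norm A * (norm x + 1) * norm (y - z)"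
      using bil_bound[of A "y - z" z] nz
      by (smt (verit, best) mult.commute mult.left_commute mult_left_mono norm_ge_zero)
    have b3: "\<bar>f (y - z)\<bar> \<le> norm f * norm (y - z)" using norm_blinfun[of f "y - z"] by simp
    have "\<bar>1/2 * (A y (y - z) + A (y - z) z) - f (y - z)\<bar> \<le> norm A * (norm x + 1) * norm (y - z) + norm f * norm (y - z)"
      by (rule half_abs_helper[OF b1 b2 b3])
    thus "\<bar>1/2 * A y y - f y - (1/2 * A z z - f z)\<bar> \<le> (norm A * (norm x + 1) + norm f) * dist y z"
      unfolding id by (simp add: dist_norm algebra_simps)
  qed
qed

lemma ple_quad:
  fixes A :: "'v::real_normed_vector \<Rightarrow>\<^sub>L ('v \<Rightarrow>\<^sub>L real)" and f :: "'v \<Rightarrow>\<^sub>L real"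
  assumes sym: "\<forall>u v. A u v = A v u"
  shows "ple (\<lambda>v. 1/2 * A v v - f v) x u (A x u - f u)"
  unfolding ple_def
proof (intro allI impI)
  fix e :: real assume e: "e > 0"
  define M where "M = norm A * norm u + norm A * (norm u)^2 + 1"
  have M: "M > 0" unfolding M_def by (simp add: add_nonneg_pos)
  show "\<exists>d>0. \<forall>y t. dist y x < d \<longrightarrow> 0 < t \<longrightarrow> t < d \<longrightarrow>
      (1/2 * A (y + t *\<^sub>R u) (y + t *\<^sub>R u) - f (y + t *\<^sub>R u) - (1/2 * A y y - f y)) / t \<le> A x u - f u + e"
  proof (intro exI[of _ "e / M"] conjI allI impI)
    show "e / M > 0" using e M by simp
    fix y t assume y: "dist y x < e / M" and t: "0 < t" "t < e / M"
    have "1/2 * A (y + t *\<^sub>R u) (y + t *\<^sub>R u) - f (y + t *\<^sub>R u) - (1/2 * A y y - f y)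
        = t * (A y u - f u) + t * t / 2 * A u u"
      using sym[rule_format, of u y] by (simp add: blinfun.bilinear_simps algebra_simps)
    hence q: "(1/2 * A (y + t *\<^sub>R u) (y + t *\<^sub>R u) - f (y + t *\<^sub>R u) - (1/2 * A y y - f y)) / t
        = A x u - f u + (A (y - x) u + t / 2 * A u u)"
      using t by (simp add: field_simps blinfun.bilinear_simps)
    have "\<bar>A (y - x) u\<bar> \<le> norm A * norm (y - x) * norm u" by (rule bil_bound)
    also have "\<dots> \<le> norm A * (e / M) * norm u"
      using y by (intro mult_right_mono mult_left_mono) (auto simp: dist_norm)
    finally have 1: "\<bar>A (y - x) u\<bar> \<le> norm A * norm u * (e / M)" by (simp add: algebra_simps)
    have "\<bar>t / 2 * A u u\<bar> \<le> t * \<bar>A u u\<bar>" using t by (simp add: abs_mult)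
    also have "\<dots> \<le> t * (norm A * (norm u)^2)"
      using bil_bound[of A u u] t by (intro mult_left_mono) (auto simp: power2_eq_square algebra_simps)
    also have "\<dots> \<le> (e / M) * (norm A * (norm u)^2)" using t by (intro mult_right_mono) auto
    finally have 2: "\<bar>t / 2 * A u u\<bar> \<le> norm A * (norm u)^2 * (e / M)" by (simp add: algebra_simps)
    define Q where "Q = e / M"
    have Q: "Q > 0" "M * Q = e" using e M unfolding Q_def by auto
    have "norm A * norm u * Q + norm A * (norm u)^2 * Q = M * Q - Q"
      unfolding M_def by (simp add: algebra_simps)
    also have "\<dots> \<le> e" using Q by simp
    finally have 3: "norm A * norm u * (e / M) + norm A * (norm u)^2 * (e / M) \<le> e" unfolding Q_def .
    show "(1/2 * A (y + t *\<^sub>R u) (y + t *\<^sub>R u) - f (y + t *\<^sub>R u) - (1/2 * A y y - f y)) / t \<le> A x u - f u + e"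
      unfolding q using 1 2 3 by (smt (verit))
  qed
qed



theorem lemma2:
  fixes \<gamma> :: "'v::banach \<Rightarrow>\<^sub>L 'x::banach"
    and A :: "'v \<Rightarrow>\<^sub>L ('v \<Rightarrow>\<^sub>L real)"
    and J :: "'x \<Rightarrow> 'x \<Rightarrow> real"
    and f :: "'v \<Rightarrow>\<^sub>L real"
    and m_A c0 c1 c2 m_\<alpha> m_L :: real
    and \<L> :: "'v \<Rightarrow> 'v \<Rightarrow> real"
  assumes refl: "reflexive_space TYPE('v)"
    and A2: "\<forall>u v. blinfun_apply (blinfun_apply A u) v = blinfun_apply (blinfun_apply A v) u"
    and A3: "m_A > 0" "\<forall>u. blinfun_apply (blinfun_apply A u) u \<ge> m_A * (norm u)\<^sup>2"
    and J1: "\<forall>w. loc_lipschitz (J w)"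
    and J2: "c0 \<ge> 0" "c1 \<ge> 0" "c2 \<ge> 0"
      "\<forall>w v. \<forall>\<xi>\<in>clarke_subdiff (J w) v. norm \<xi> \<le> c0 + c1 * norm v + c2 * norm w"
    and J3: "m_\<alpha> \<ge> 0" "m_L \<ge> 0"
      "\<forall>w1 w2 v1 v2. clarke_dd (J w1) v1 (v2 - v1) + clarke_dd (J w2) v2 (v1 - v2)
          \<le> ereal (m_\<alpha> * (norm (v1 - v2))\<^sup>2 + m_L * norm (w1 - w2) * norm (v1 - v2))"
    and S: "m_A > (m_\<alpha> + m_L) * (norm \<gamma>)\<^sup>2"
    and L_def: "\<forall>w v. \<L> w v = 1/2 * blinfun_apply (blinfun_apply A v) v - blinfun_apply f v + J (blinfun_apply \<gamma> w) (blinfun_apply \<gamma> v)"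
  shows "(\<forall>w. loc_lipschitz (\<L> w))
       \<and> (\<forall>w v. clarke_subdiff (\<L> w) v \<subseteq>
              {blinfun_apply A v - f + (\<xi> o\<^sub>L \<gamma>) | \<xi>. \<xi> \<in> clarke_subdiff (J (blinfun_apply \<gamma> w)) (blinfun_apply \<gamma> v)})
       \<and> (\<forall>w. strictly_convex (\<L> w))"
proof -
  have sym: "\<forall>u v. A u v = A v u" using A2 by blast
  have Lw: "\<L> w = (\<lambda>v. (1/2 * A v v - f v) + J (\<gamma> w) (\<gamma> v))" for w
    using L_def by (intro ext) simp
  have gamma_lin: "linear (blinfun_apply \<gamma>)"
    unfolding linear_iff by (simp add: blinfun.add_right blinfun.scaleR_right)
  have i: "\<forall>w. loc_lipschitz (\<L> w)"
  proof
    fix w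
    have "loc_lipschitz (\<lambda>v. (1/2 * A v v - f v) + J (\<gamma> w) (\<gamma> v))"
      by (rule ll_add[OF ll_quad ll_comp]) (use J1 in blast)
    thus "loc_lipschitz (\<L> w)" unfolding Lw .
  qed
  have ii: "\<forall>w v. clarke_subdiff (\<L> w) v \<subseteq>
              {A v - f + (\<xi> o\<^sub>L \<gamma>) | \<xi>. \<xi> \<in> clarke_subdiff (J (\<gamma> w)) (\<gamma> v)}"
  proof (intro allI subsetI)
    fix w v \<zeta> assume \<zeta>: "\<zeta> \<in> clarke_subdiff (\<L> w) v"
    define G where "G = J (\<gamma> w)"
    have GL: "loc_lipschitz G" using J1 G_def by blast
    obtain K where K: "K \<ge> 0" "\<And>x. clarke_dd G (\<gamma> v) x = ereal (cdr G (\<gamma> v) x)"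
      "\<And>x. cdr G (\<gamma> v) x \<le> K * norm x" "\<And>x. ple G (\<gamma> v) x (cdr G (\<gamma> v) x)"
      using cdd_finite[OF GL] by blast
    define p where "p = cdr G (\<gamma> v)"
    have pple: "ple G (\<gamma> v) x (p x)" for x unfolding p_def by (rule K(4))
    have pcdd: "clarke_dd G (\<gamma> v) x = ereal (p x)" for x unfolding p_def by (rule K(2))
    have ple_real: "p x \<le> r" if "ple G (\<gamma> v) x r" for x r
    proof -
      have "clarke_dd G (\<gamma> v) x \<le> ereal r" using that cdd_le_iff by blast
      thus ?thesis unfolding pcdd by simp
    qed
    have bound: "\<zeta> u \<le> A v u - f u + p (\<gamma> u)" for u
    proof -
      have "ple (\<lambda>y. (1/2 * A y y - f y) + G (\<gamma> y)) v u ((A v u - f u) + p (\<gamma> u))"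
        by (rule ple_sum[OF ple_quad[OF sym] ple_comp]) (rule pple)
      hence "ple (\<L> w) v u ((A v u - f u) + p (\<gamma> u))" unfolding Lw G_def .
      hence "clarke_dd (\<L> w) v u \<le> ereal ((A v u - f u) + p (\<gamma> u))" using cdd_le_iff by blast
      moreover have "ereal (\<zeta> u) \<le> clarke_dd (\<L> w) v u" using \<zeta> unfolding clarke_subdiff_def by blast
      ultimately have "ereal (\<zeta> u) \<le> ereal ((A v u - f u) + p (\<gamma> u))" by (rule order_trans[rotated])
      thus ?thesis by (simp only: ereal_less_eq(3))
    qed
    define \<eta> where "\<eta> u = \<zeta> u - A v u + f u" for u
    have eta_lin: "linear \<eta>"
      unfolding linear_iff \<eta>_def by (simp add: blinfun.bilinear_simps algebra_simps)
    have padd: "p (x + y) \<le> p x + p y" for x y by (rule ple_real[OF ple_add[OF pple pple]])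
    have pscale: "p (c *\<^sub>R x) \<le> c * p x" if "c > 0" for c x by (rule ple_real[OF ple_scale[OF pple that]])
    have p0: "p 0 \<le> 0" by (rule ple_real[OF ple_zero])
    have dom: "\<eta> u \<le> p (\<gamma> u)" for u using bound[of u] unfolding \<eta>_def by simp
    obtain \<xi> where \<xi>: "linear \<xi>" "\<And>u. \<xi> (\<gamma> u) = \<eta> u" "\<And>x. \<xi> x \<le> p x"
      using hb_ext[OF gamma_lin eta_lin padd pscale p0 dom] by blast
    have \<xi>add: "\<xi> (x + y) = \<xi> x + \<xi> y" and \<xi>scale: "\<xi> (c *\<^sub>R x) = c * \<xi> x" for x y c
      using \<xi>(1) unfolding linear_iff by auto
    have \<xi>bd: "\<bar>\<xi> x\<bar> \<le> norm x * K" for x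
    proof -
      have "\<xi> x \<le> K * norm x" using \<xi>(3)[of x] K(3)[of x] unfolding p_def by simp
      moreover have "- \<xi> x \<le> K * norm x"
      proof -
        have "- \<xi> x = \<xi> ((-1) *\<^sub>R x)" using \<xi>scale[of "-1" x] by simp
        also have "\<dots> \<le> K * norm ((-1) *\<^sub>R x)" using \<xi>(3) K(3) unfolding p_def by (meson order_trans)
        finally show ?thesis by simp
      qed
      ultimately show ?thesis by (simp add: abs_le_iff mult.commute)
    qed
    have bl: "bounded_linear \<xi>"
      by (rule bounded_linear_intro[of _ K]) (auto simp: \<xi>add \<xi>scale \<xi>bd)
    define \<xi>b where "\<xi>b = Blinfun \<xi>"
    have ap: "blinfun_apply \<xi>b = \<xi>" unfolding \<xi>b_def using bl by (rule bounded_linear_Blinfun_apply)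
    have inC: "\<xi>b \<in> clarke_subdiff (J (\<gamma> w)) (\<gamma> v)"
      unfolding clarke_subdiff_def G_def[symmetric] using pcdd \<xi>(3) by (simp add: ap)
    have eq: "\<zeta> = A v - f + (\<xi>b o\<^sub>L \<gamma>)"
    proof (rule blinfun_eqI)
      fix u
      show "\<zeta> u = (A v - f + (\<xi>b o\<^sub>L \<gamma>)) u"
        using \<xi>(2)[of u] by (simp add: ap \<eta>_def blinfun.bilinear_simps)
    qed
    show "\<zeta> \<in> {A v - f + (\<xi> o\<^sub>L \<gamma>) | \<xi>. \<xi> \<in> clarke_subdiff (J (\<gamma> w)) (\<gamma> v)}"
      using eq inC by blast
  qed
  have iii: "\<forall>w. strictly_convex (\<L> w)"
    unfolding strictly_convex_def
  proof (intro allI impI)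
    fix w x y :: 'v and \<theta> :: real
    assume H: "x \<noteq> y \<and> 0 < \<theta> \<and> \<theta> < 1"
    define G where "G = J (\<gamma> w)"
    have GL: "loc_lipschitz G" using J1 G_def by blast
    define e where "e = y - x"
    define d where "d = \<gamma> e"
    define c where "c = m_\<alpha> * (norm d)^2"
    have c0: "c \<ge> 0" unfolding c_def using J3(1) by simp
    define h where "h \<tau> = G (\<gamma> x + \<tau> *\<^sub>R d) + c/2 * \<tau>^2" for \<tau>
    have contG: "continuous_on UNIV G"
      by (rule continuous_at_imp_continuous_on) (use loc_lip_cont[OF GL] in blast)
    have "continuous_on UNIV (\<lambda>\<tau>::real. G (\<gamma> x + \<tau> *\<^sub>R d))"
      by (rule continuous_on_compose2[OF contG]) (auto intro!: continuous_intros)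
    hence conth: "continuous_on UNIV h" unfolding h_def by (intro continuous_intros)
    have P: "\<exists>K. \<forall>e>0. \<exists>\<delta>>0. \<forall>\<mu>. 0 < \<mu> \<and> \<mu> < \<delta> \<longrightarrow>
        h (s + \<mu>) - h s \<le> (K + e) * \<mu> \<and> h (t + \<mu>) - h t \<ge> (K - e) * \<mu>" if st: "s < t" for s t
    proof -
      have d21: "(\<gamma> x + t *\<^sub>R d) - (\<gamma> x + s *\<^sub>R d) = (t - s) *\<^sub>R d" by (simp add: algebra_simps)
      have d12: "(\<gamma> x + s *\<^sub>R d) - (\<gamma> x + t *\<^sub>R d) = (s - t) *\<^sub>R d" by (simp add: algebra_simps)
      have nv: "(norm ((s - t) *\<^sub>R d))^2 = (t - s)^2 * (norm d)^2"
        by (simp add: power_mult_distrib power2_commute[of s t])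
      obtain K1 where K1: "\<And>z. clarke_dd G (\<gamma> x + s *\<^sub>R d) z = ereal (cdr G (\<gamma> x + s *\<^sub>R d) z)"
          "\<And>z. ple G (\<gamma> x + s *\<^sub>R d) z (cdr G (\<gamma> x + s *\<^sub>R d) z)"
        using cdd_finite[OF GL, of "\<gamma> x + s *\<^sub>R d"] by blast
      obtain K2 where K2: "\<And>z. clarke_dd G (\<gamma> x + t *\<^sub>R d) z = ereal (cdr G (\<gamma> x + t *\<^sub>R d) z)"
          "\<And>z. ple G (\<gamma> x + t *\<^sub>R d) z (cdr G (\<gamma> x + t *\<^sub>R d) z)"
        using cdd_finite[OF GL, of "\<gamma> x + t *\<^sub>R d"] by blast
      have J3i: "clarke_dd G (\<gamma> x + s *\<^sub>R d) ((t - s) *\<^sub>R d) + clarke_dd G (\<gamma> x + t *\<^sub>R d) ((s - t) *\<^sub>R d)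
          \<le> ereal (m_\<alpha> * (norm ((s - t) *\<^sub>R d))\<^sup>2 + m_L * norm (\<gamma> w - \<gamma> w) * norm ((s - t) *\<^sub>R d))"
        using J3(3)[THEN spec[of _ "\<gamma> w"], THEN spec[of _ "\<gamma> w"], THEN spec[of _ "\<gamma> x + s *\<^sub>R d"], THEN spec[of _ "\<gamma> x + t *\<^sub>R d"]]
        unfolding G_def d21 d12 .
      have "ereal (cdr G (\<gamma> x + s *\<^sub>R d) ((t - s) *\<^sub>R d) + cdr G (\<gamma> x + t *\<^sub>R d) ((s - t) *\<^sub>R d))
          \<le> ereal (m_\<alpha> * ((t - s)^2 * (norm d)^2))"
        using J3i unfolding K1(1) K2(1) nv by simp
      hence ab: "cdr G (\<gamma> x + s *\<^sub>R d) ((t - s) *\<^sub>R d) + cdr G (\<gamma> x + t *\<^sub>R d) ((s - t) *\<^sub>R d) \<le> c * (t - s)^2"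
        unfolding c_def by (simp add: mult.commute mult.left_commute)
      have "\<exists>K. \<forall>e>0. \<exists>\<delta>>0. \<forall>\<mu>. 0 < \<mu> \<and> \<mu> < \<delta> \<longrightarrow>
      (G (\<gamma> x + (s + \<mu>) *\<^sub>R d) + c/2 * (s + \<mu>)^2) - (G (\<gamma> x + s *\<^sub>R d) + c/2 * s^2) \<le> (K + e) * \<mu> \<and>
      (G (\<gamma> x + (t + \<mu>) *\<^sub>R d) + c/2 * (t + \<mu>)^2) - (G (\<gamma> x + t *\<^sub>R d) + c/2 * t^2) \<ge> (K - e) * \<mu>"
        by (rule P_from_ple[OF st c0 ab K1(2) K2(2)])
      thus ?thesis unfolding h_def .
    qed
    have "(h \<theta> - h 0) / (\<theta> - 0) \<le> (h 1 - h \<theta>) / (1 - \<theta>)"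
      by (rule conv1d[OF conth P]) (use H in auto)
    hence hconv: "h \<theta> \<le> (1 - \<theta>) * h 0 + \<theta> * h 1"
      using H by (simp add: field_simps)
    define a0 where "a0 = 1/2 * A x x - f x"
    define a1 where "a1 = A x e - f e"
    define a2 where "a2 = A e e"
    have Lexp: "\<L> w (x + \<tau> *\<^sub>R e) = a0 + a1 * \<tau> + a2 / 2 * \<tau>^2 + G (\<gamma> x + \<tau> *\<^sub>R d)" for \<tau>
    proof -
      have g1: "\<gamma> (x + \<tau> *\<^sub>R e) = \<gamma> x + \<tau> *\<^sub>R d"
        unfolding d_def by (simp only: blinfun.add_right blinfun.scaleR_right)
      have f1: "f (x + \<tau> *\<^sub>R e) = f x + \<tau> * f e"
        by (simp only: blinfun.add_right blinfun.scaleR_right real_scaleR_def)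
      have A1: "A (x + \<tau> *\<^sub>R e) (x + \<tau> *\<^sub>R e) = A x x + \<tau> * A x e + \<tau> * A e x + (\<tau> * \<tau>) * A e e"
        by (simp only: blinfun.add_right blinfun.scaleR_right blinfun.add_left blinfun.scaleR_left
            real_scaleR_def distrib_left distrib_right mult.assoc add.assoc)
      have s: "A e x = A x e" using sym by blast
      show ?thesis
        unfolding L_def[rule_format] g1 f1 A1 s a0_def a1_def a2_def G_def
        by (simp add: power2_eq_square algebra_simps)
    qed
    have "e \<noteq> 0" using H unfolding e_def by auto
    hence ne: "norm e > 0" by simp
    have a2c: "a2 > c"
    proof -
      have nd: "norm d \<le> norm \<gamma> * norm e" unfolding d_def by (rule norm_blinfun)
      hence "(norm d)^2 \<le> (norm \<gamma> * norm e)^2" by (intro power_mono) auto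
      hence "c \<le> m_\<alpha> * ((norm \<gamma>)^2 * (norm e)^2)"
        unfolding c_def using J3(1) by (simp add: mult_left_mono power_mult_distrib)
      also have "\<dots> \<le> (m_\<alpha> + m_L) * (norm \<gamma>)^2 * (norm e)^2"
        using J3(2) by (simp add: algebra_simps)
      also have "\<dots> < m_A * (norm e)^2"
        using S ne by (intro mult_strict_right_mono) auto
      also have "\<dots> \<le> a2" unfolding a2_def using A3(2) by blast
      finally show ?thesis .
    qed
    have h0: "h 0 = G (\<gamma> x)" unfolding h_def by simp
    have L0: "\<L> w x = a0 + h 0" using Lexp[of 0] unfolding h0 by simp
    have L1: "\<L> w y = a0 + a1 + a2 / 2 + (h 1 - c / 2)"
    proof -
      have "y = x + 1 *\<^sub>R e" unfolding e_def by simp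
      hence "\<L> w y = a0 + a1 * 1 + a2 / 2 * 1^2 + G (\<gamma> x + 1 *\<^sub>R d)" using Lexp[of 1] by simp
      thus ?thesis unfolding h_def by simp
    qed
    have Lt: "\<L> w ((1 - \<theta>) *\<^sub>R x + \<theta> *\<^sub>R y) = a0 + a1 * \<theta> + a2 / 2 * \<theta>^2 + (h \<theta> - c / 2 * \<theta>^2)"
    proof -
      have "(1 - \<theta>) *\<^sub>R x + \<theta> *\<^sub>R y = x + \<theta> *\<^sub>R e" unfolding e_def by (simp add: algebra_simps)
      thus ?thesis using Lexp[of \<theta>] unfolding h_def by simp
    qed
    have pos: "(a2 - c) / 2 * (\<theta> * (1 - \<theta>)) > 0" using a2c H by simp
    have ident: "(1 - \<theta>) * (a0 + h 0) + \<theta> * (a0 + a1 + a2 / 2 + (h 1 - c / 2))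
        - (a0 + a1 * \<theta> + a2 / 2 * \<theta>^2 + (h \<theta> - c / 2 * \<theta>^2))
        = (a2 - c) / 2 * (\<theta> * (1 - \<theta>)) + ((1 - \<theta>) * h 0 + \<theta> * h 1 - h \<theta>)"
      by (simp add: field_simps power2_eq_square)
    show "\<L> w ((1 - \<theta>) *\<^sub>R x + \<theta> *\<^sub>R y) < (1 - \<theta>) * \<L> w x + \<theta> * \<L> w y"
      unfolding Lt L0 L1 using ident pos hconv by argo
  qed
  show ?thesis using i ii iii by blast
qed


end
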